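(* Consider the partial-block protocol described in the context, on a finite set of agents $A$ with a connected undirected connectivity graph $G=(A,E)$, and suppose the block length satisfies $L\le |A|$. Then a deadlock never occurs: for every epoch $t$ it is not the case that $D(i)$ holds for all $i\in A$.
   Context: Let $A$ be a finite set of agents (agent IDs) and $G=(A,E)$ a connected undirected graph; $\Gamma_i$ denotes the set of neighbors of $i$. Fix an integer $L\ge 1$ (block length). Each agent $i$ maintains a partial block $pb_i\subseteq A$ (a set of agent IDs). The system runs in epochs $t=0,1,2,\dots$; $pb_i^{(t)}$ is agent $i$'s partial block at the start of epoch $t$. In each epoch: (C1) every agent $i$ with $i\notin pb_i$ adds $i$ to $pb_i$; (C2) every agent $i$ sends its $pb_i$ to every neighbor $j\in\Gamma_i$. When an agent $i$ receives a partial block $P$ (from a neighbor or via a direct message) it applies the rule: (R1) if $|P\setminus\{i\}|>|pb_i\setminus\{i\}|$, agent $i$ sets $pb_i:=P$; (R2) otherwise, if $|P\setminus\{i\}|=|pb_i\setminus\{i\}|$ and $P\neq pb_i$, agent $i$ sends its current $pb_i$ directly to every agent in $P\setminus pb_i$, each of which processes it by the same rule; (R3) otherwise the received block is discarded. All received partial blocks are assumed to pass all validity and similarity checks. For an agent $i$ and epoch $t$, the predicate $D(i)$ means: $pb_i^{(t)}=pb_i^{(t+1)}$ and $|pb_i^{(t)}|<L$. A deadlock at epoch $t$ means that $D(i)$ holds for all $i\in A$. *)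

theory Defs
  imports Main "HOL-Library.Multiset"
begin

text \<open>Agents have type 'a; the agent set is a finite set A,
  the graph is given by an edge relation E (undirected: symmetric), neighbours of i
  are the j with (i,j) in E. A configuration of all partial blocks is pb :: 'a => 'a set.
  Pending messages are a multiset of pairs (recipient, block).\<close>

definition neighbours :: "('a \<times> 'a) set \<Rightarrow> 'a \<Rightarrow> 'a set" where
  "neighbours E i = {j. (i, j) \<in> E}"

text \<open>Agent i receives partial block P (rules R1, R2, R3). Result: new configuration
  and newly generated direct messages.\<close>
definition receive ::
  "'a \<Rightarrow> 'a set \<Rightarrow> ('a \<Rightarrow> 'a set) \<Rightarrow> ('a \<Rightarrow> 'a set) \<times> ('a \<times> 'a set) multiset" where
  "receive i P pb =
     (if card (P - {i}) > card (pb i - {i}) then (pb(i := P), {#})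
      else if card (P - {i}) = card (pb i - {i}) \<and> P \<noteq> pb i
        then (pb, image_mset (\<lambda>k. (k, pb i)) (mset_set (P - pb i)))
      else (pb, {#}))"

definition msg_step ::
  "('a \<Rightarrow> 'a set) \<times> ('a \<times> 'a set) multiset \<Rightarrow> ('a \<Rightarrow> 'a set) \<times> ('a \<times> 'a set) multiset \<Rightarrow> bool" where
  "msg_step c c' =
     (\<exists>k P. (k, P) \<in># snd c \<and>
        c' = (fst (receive k P (fst c)), (snd c - {#(k, P)#}) + snd (receive k P (fst c))))"

definition after_C1 :: "'a set \<Rightarrow> ('a \<Rightarrow> 'a set) \<Rightarrow> 'a \<Rightarrow> 'a set" where
  "after_C1 A pb = (\<lambda>i. if i \<in> A \<and> i \<notin> pb i then insert i (pb i) else pb i)"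

definition C2_msgs :: "'a set \<Rightarrow> ('a \<times> 'a) set \<Rightarrow> ('a \<Rightarrow> 'a set) \<Rightarrow> ('a \<times> 'a set) multiset" where
  "C2_msgs A E pb = (\<Sum>i\<in>A. image_mset (\<lambda>j. (j, pb i)) (mset_set (neighbours E i)))"

text \<open>One epoch: C1, then C2, then all messages (including cascaded direct messages)
  are processed in some order until none remain; pb' is the configuration at the start
  of the next epoch.\<close>
definition epoch :: "'a set \<Rightarrow> ('a \<times> 'a) set \<Rightarrow> ('a \<Rightarrow> 'a set) \<Rightarrow> ('a \<Rightarrow> 'a set) \<Rightarrow> bool" where
  "epoch A E pb pb' =
     msg_step\<^sup>*\<^sup>* (after_C1 A pb, C2_msgs A E (after_C1 A pb)) (pb', {#})"

text \<open>An execution: pbs t is the configuration at the start of epoch t.\<close>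
definition execution :: "'a set \<Rightarrow> ('a \<times> 'a) set \<Rightarrow> (nat \<Rightarrow> 'a \<Rightarrow> 'a set) \<Rightarrow> bool" where
  "execution A E pbs = ((\<forall>i\<in>A. pbs 0 i \<subseteq> A) \<and> (\<forall>t. epoch A E (pbs t) (pbs (Suc t))))"

definition D :: "nat \<Rightarrow> (nat \<Rightarrow> 'a \<Rightarrow> 'a set) \<Rightarrow> nat \<Rightarrow> 'a \<Rightarrow> bool" where
  "D L pbs t i = (pbs t i = pbs (Suc t) i \<and> card (pbs t i) < L)"

definition deadlock :: "'a set \<Rightarrow> nat \<Rightarrow> (nat \<Rightarrow> 'a \<Rightarrow> 'a set) \<Rightarrow> nat \<Rightarrow> bool" where
  "deadlock A L pbs t = (\<forall>i\<in>A. D L pbs t i)"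

definition connected_undirected :: "'a set \<Rightarrow> ('a \<times> 'a) set \<Rightarrow> bool" where
  "connected_undirected A E =
     (E \<subseteq> A \<times> A \<and> sym E \<and> (\<forall>i\<in>A. \<forall>j\<in>A. (i, j) \<in> E\<^sup>*))"

end

theory Submission
  imports Defs
begin

definition inv_c :: "'a set \<Rightarrow> ('a \<Rightarrow> 'a set) \<times> ('a \<times> 'a set) multiset \<Rightarrow> bool" where
  "inv_c A c = ((\<forall>i\<in>A. fst c i \<subseteq> A) \<and> (\<forall>m\<in>#snd c. fst m \<in> A \<and> snd m \<subseteq> A))"

lemma inv_step:
  assumes "msg_step c c'" "inv_c A c" "finite A"
  shows "inv_c A c'"
proof -
  obtain k P where kP: "(k, P) \<in># snd c"
    and c': "c' = (fst (receive k P (fst c)), (snd c - {#(k, P)#}) + snd (receive k P (fst c)))"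
    using assms(1) unfolding msg_step_def by blast
  have "fst (k, P) \<in> A \<and> snd (k, P) \<subseteq> A" using assms(2) kP unfolding inv_c_def by blast
  then have kA: "k \<in> A" and PA: "P \<subseteq> A" by auto
  have fP: "finite (P - fst c k)" using PA assms(3) by (meson finite_Diff finite_subset)
  have rest: "\<forall>m\<in>#snd c - {#(k, P)#}. fst m \<in> A \<and> snd m \<subseteq> A"
    using assms(2) unfolding inv_c_def by (meson in_diffD)
  have pbA: "\<forall>i\<in>A. fst c i \<subseteq> A" using assms(2) unfolding inv_c_def by blast
  have r1: "\<forall>i\<in>A. fst (receive k P (fst c)) i \<subseteq> A"
    using pbA PA unfolding receive_def by auto
  have r2: "\<forall>m\<in>#snd (receive k P (fst c)). fst m \<in> A \<and> snd m \<subseteq> A"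
  proof
    fix m assume m: "m \<in># snd (receive k P (fst c))"
    show "fst m \<in> A \<and> snd m \<subseteq> A"
    proof (cases "card (P - {k}) > card (fst c k - {k})")
      case True then show ?thesis using m unfolding receive_def by simp
    next
      case False
      then have "m \<in># image_mset (\<lambda>x. (x, fst c k)) (mset_set (P - fst c k))"
        using m unfolding receive_def by (simp split: if_splits)
      then show ?thesis using fP PA pbA[rule_format, OF kA] by auto
    qed
  qed
  show ?thesis unfolding c' inv_c_def using r1 r2 rest by auto
qed

lemma inv_steps:
  assumes "msg_step\<^sup>*\<^sup>* c c'" "inv_c A c" "finite A"
  shows "inv_c A c'"
  using assms by (induction rule: rtranclp_induct) (auto intro: inv_step)

lemma mono_step:
  assumes "msg_step c c'"
  shows "fst c' i = fst c i \<or> card (fst c i - {i}) < card (fst c' i - {i})"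
proof -
  obtain k P where c': "c' = (fst (receive k P (fst c)), (snd c - {#(k, P)#}) + snd (receive k P (fst c)))"
    using assms(1) unfolding msg_step_def by blast
  have "fst (receive k P (fst c)) i = fst c i \<or> card (fst c i - {i}) < card (fst (receive k P (fst c)) i - {i})"
  proof (cases "card (P - {k}) > card (fst c k - {k})")
    case True
    then have "fst (receive k P (fst c)) = (fst c)(k := P)" unfolding receive_def by simp
    then show ?thesis using True by (cases "i = k") simp_all
  next
    case False
    then have "fst (receive k P (fst c)) = fst c" unfolding receive_def by simp
    then show ?thesis by simp
  qed
  then show ?thesis unfolding c' by simp
qed

lemma mono_steps:
  assumes "msg_step\<^sup>*\<^sup>* c c'"
  shows "fst c' i = fst c i \<or> card (fst c i - {i}) < card (fst c' i - {i})"
  using assms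
proof (induction rule: rtranclp_induct)
  case base then show ?case by simp
next
  case (step y z)
  have a: "fst z i = fst y i \<or> card (fst y i - {i}) < card (fst z i - {i})" by (rule mono_step[OF step(2)])
  from a show ?case
  proof
    assume "fst z i = fst y i" then show ?case using step(3) by simp
  next
    assume lt: "card (fst y i - {i}) < card (fst z i - {i})"
    from step(3) show ?case
    proof
      assume "fst y i = fst c i" then show ?case using lt by simp
    next
      assume "card (fst c i - {i}) < card (fst y i - {i})" then show ?case using lt by linarith
    qed
  qed
qed

lemma deliver:
  assumes "msg_step\<^sup>*\<^sup>* c c'" "snd c' = {#}" "(k, P) \<in># snd c"
  shows "\<exists>c1. msg_step\<^sup>*\<^sup>* c c1 \<and> (k, P) \<in># snd c1 \<and>
     msg_step\<^sup>*\<^sup>* (fst (receive k P (fst c1)), (snd c1 - {#(k, P)#}) + snd (receive k P (fst c1))) c'"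
  using assms
proof (induction arbitrary: k P rule: converse_rtranclp_induct)
  case base then show ?case by simp
next
  case (step y z)
  obtain k' P' where kP: "(k', P') \<in># snd y"
    and z: "z = (fst (receive k' P' (fst y)), (snd y - {#(k', P')#}) + snd (receive k' P' (fst y)))"
    using step(1) unfolding msg_step_def by blast
  show ?case
  proof (cases "(k, P) = (k', P')")
    case True
    have "msg_step\<^sup>*\<^sup>* y y" by simp
    then show ?thesis using True step(2) step(5) z by blast
  next
    case False
    have "(k, P) \<in># snd z" using False step(5) z by (auto simp: in_diff_count)
    then obtain c1 where "msg_step\<^sup>*\<^sup>* z c1" "(k, P) \<in># snd c1"
      "msg_step\<^sup>*\<^sup>* (fst (receive k P (fst c1)), (snd c1 - {#(k, P)#}) + snd (receive k P (fst c1))) c'"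
      using step(3)[OF step(4)] by blast
    then show ?thesis using step(1) by (meson converse_rtranclp_into_rtranclp)
  qed
qed

lemma receive_R1: "card (P - {k}) > card (pb k - {k}) \<Longrightarrow> receive k P pb = (pb(k := P), {#})"
  unfolding receive_def by simp

lemma receive_R2: "card (P - {k}) = card (pb k - {k}) \<Longrightarrow> P \<noteq> pb k \<Longrightarrow>
  receive k P pb = (pb, image_mset (\<lambda>x. (x, pb k)) (mset_set (P - pb k)))"
  unfolding receive_def by simp

lemma path_const:
  assumes "\<forall>(a, b)\<in>E. f a = f b" "(i, j) \<in> E\<^sup>*"
  shows "f i = f j"
  using assms(2) by (induction rule: rtrancl_induct) (use assms(1) in auto)

lemma comb:
  fixes S :: "'a \<Rightarrow> 'a set"
  assumes fin: "finite A" and conn: "connected_undirected A E" and ne: "A \<noteq> {}"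
    and S: "\<forall>i\<in>A. S i \<subseteq> A \<and> i \<in> S i \<and> card (S i) < card A"
    and edge: "\<forall>i\<in>A. \<forall>j. (i, j) \<in> E \<longrightarrow> R j (S i)"
    and R: "\<And>k P. R k P \<Longrightarrow> k \<in> A \<and> P \<subseteq> A \<and> \<not> card (P - {k}) > card (S k - {k}) \<and>
        (card (P - {k}) = card (S k - {k}) \<and> P \<noteq> S k \<longrightarrow> (\<forall>x\<in>P - S k. R x (S k)))"
  shows False
proof -
  have EA: "E \<subseteq> A \<times> A" and sE: "sym E" and cE: "\<forall>i\<in>A. \<forall>j\<in>A. (i, j) \<in> E\<^sup>*"
    using conn unfolding connected_undirected_def by auto
  have finS: "finite (S i)" if "i \<in> A" for i using S that fin by (meson finite_subset)
  have cardpos: "card (S i) \<ge> 1" if "i \<in> A" for i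
    using S that finS[OF that] by (metis One_nat_def Suc_leI card_gt_0_iff empty_iff)
  have cm: "card (S k - {k}) = card (S k) - 1" if "k \<in> A" for k
    using S that finS[OF that] by simp
  have le: "card (S i) \<le> card (S j)" if e: "(i, j) \<in> E" for i j
  proof -
    have ij: "i \<in> A" "j \<in> A" using e EA by auto
    have "\<not> card (S i - {j}) > card (S j - {j})" using R[OF edge[rule_format, OF ij(1) e]] by blast
    moreover have "card (S i - {j}) \<ge> card (S i) - 1"
      using finS[OF ij(1)] by (metis card_Diff_singleton diff_le_self card_Diff1_le order_refl
          Diff_insert_absorb card_Diff_singleton_if le_refl)
    ultimately show ?thesis using cm[OF ij(2)] cardpos[OF ij(1)] cardpos[OF ij(2)] by linarith
  qed
  have eqE: "card (S i) = card (S j)" if e: "(i, j) \<in> E" for i j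
    using le[OF e] le[of j i] e sE by (meson antisym symD)
  have eqall: "card (S i) = card (S j)" if "i \<in> A" "j \<in> A" for i j
    using path_const[of E "\<lambda>x. card (S x)" i j] eqE cE that by auto
  have inS: "j \<in> S i" if e: "(i, j) \<in> E" for i j
  proof (rule ccontr)
    assume nj: "j \<notin> S i"
    have ij: "i \<in> A" "j \<in> A" using e EA by auto
    have "\<not> card (S i - {j}) > card (S j - {j})" using R[OF edge[rule_format, OF ij(1) e]] by blast
    then show False using nj cm[OF ij(2)] cardpos[OF ij(2)] eqall[OF ij] by simp
  qed
  have Seq: "S i = S j" if e: "(i, j) \<in> E" for i j
  proof (rule ccontr)
    assume ne: "S i \<noteq> S j"
    have ij: "i \<in> A" "j \<in> A" using e EA by auto
    have c1: "card (S i - {j}) = card (S j - {j})"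
      using inS[OF e] S ij cm[OF ij(2)] eqall[OF ij] finS[OF ij(1)] by simp
    have "\<not> S i \<subseteq> S j"
      using ne card_subset_eq[OF finS[OF ij(2)]] eqall[OF ij] by blast
    then obtain x where x: "x \<in> S i" "x \<notin> S j" by blast
    have Rx: "R x (S j)" using R[OF edge[rule_format, OF ij(1) e]] c1 ne x by blast
    have xA: "x \<in> A" using R[OF Rx] by blast
    have "\<not> card (S j - {x}) > card (S x - {x})" using R[OF Rx] by blast
    then show False using x cm[OF xA] cardpos[OF xA] eqall[OF ij(2) xA] by simp
  qed
  obtain i0 where i0: "i0 \<in> A" using ne by blast
  have "A \<subseteq> S i0"
  proof
    fix j assume "j \<in> A"
    then have "S j = S i0" using path_const[of E S j i0] Seq cE i0 by auto
    then show "j \<in> S i0" using S \<open>j \<in> A\<close> by auto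
  qed
  then have "card A \<le> card (S i0)" using finS[OF i0] by (simp add: card_mono)
  then show False using S i0 by auto
qed

theorem corollary1:
  fixes A :: "'a set" and E :: "('a \<times> 'a) set" and L :: nat
    and pbs :: "nat \<Rightarrow> 'a \<Rightarrow> 'a set"
  assumes "finite A"
    and "connected_undirected A E"
    and "1 \<le> L" and "L \<le> card A"
    and "execution A E pbs"
  shows "\<forall>t. \<not> deadlock A L pbs t"
proof (intro allI notI)
  fix t assume dl: "deadlock A L pbs t"
  have ex0: "\<forall>i\<in>A. pbs 0 i \<subseteq> A" using assms(5) unfolding execution_def by auto
  have ex: "\<And>t. epoch A E (pbs t) (pbs (Suc t))" using assms(5) unfolding execution_def by auto
  have EA: "E \<subseteq> A \<times> A" using assms(2) unfolding connected_undirected_def by auto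
  have C2in: "(j, pb i) \<in># C2_msgs A E pb" if "i \<in> A" "(i, j) \<in> E" for pb i j
  proof -
    have "neighbours E i \<subseteq> A" using EA unfolding neighbours_def by blast
    then have fn: "finite (neighbours E i)" using assms(1) by (rule finite_subset)
    have jn: "j \<in># mset_set (neighbours E i)" using fn that(2) unfolding neighbours_def by simp
    have h: "(j, pb i) \<in># image_mset (\<lambda>j. (j, pb i)) (mset_set (neighbours E i))"
      unfolding set_image_mset using jn by (rule imageI)
    have eq: "set_mset (C2_msgs A E pb) = (\<Union>x\<in>A. set_mset (image_mset (\<lambda>j. (j, pb x)) (mset_set (neighbours E x))))"
      unfolding C2_msgs_def by (rule set_mset_sum[OF assms(1)])
    show ?thesis unfolding eq using that(1) h by (rule UN_I)
  qed
  have init_inv: "inv_c A (after_C1 A pb, C2_msgs A E (after_C1 A pb))" if pbA: "\<forall>i\<in>A. pb i \<subseteq> A" for pb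
  proof -
    have 1: "\<forall>i\<in>A. after_C1 A pb i \<subseteq> A" using pbA unfolding after_C1_def by auto
    have "\<forall>m\<in>#C2_msgs A E (after_C1 A pb). fst m \<in> A \<and> snd m \<subseteq> A"
    proof
      fix m assume "m \<in># C2_msgs A E (after_C1 A pb)"
      then obtain i where i: "i \<in> A" "m \<in># image_mset (\<lambda>j. (j, after_C1 A pb i)) (mset_set (neighbours E i))"
      proof -
        have eq: "set_mset (C2_msgs A E (after_C1 A pb)) = (\<Union>x\<in>A. set_mset (image_mset (\<lambda>j. (j, after_C1 A pb x)) (mset_set (neighbours E x))))"
          unfolding C2_msgs_def by (rule set_mset_sum[OF assms(1)])
        show ?thesis using \<open>m \<in># C2_msgs A E (after_C1 A pb)\<close> that unfolding eq by blast
      qed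
      have fn2: "neighbours E i \<subseteq> A" using EA unfolding neighbours_def by blast
      then have fn: "finite (neighbours E i)" "neighbours E i \<subseteq> A" using assms(1) by (auto intro: finite_subset)
      obtain j where j: "j \<in># mset_set (neighbours E i)" "m = (j, after_C1 A pb i)"
        using i(2) unfolding set_image_mset by blast
      have "j \<in> A" using j(1) fn by auto
      then show "fst m \<in> A \<and> snd m \<subseteq> A" using j(2) 1 i(1) by simp
    qed
    then show ?thesis using 1 unfolding inv_c_def by simp
  qed
  have allinv: "\<forall>i\<in>A. pbs t i \<subseteq> A" for t
  proof (induction t)
    case 0 then show ?case using ex0 by simp
  next
    case (Suc t)
    have "inv_c A (pbs (Suc t), {#})"
      using inv_steps[OF ex[of t, unfolded epoch_def] init_inv[OF Suc] assms(1)] .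
    then show ?case unfolding inv_c_def by simp
  qed
  define pb0 where "pb0 = after_C1 A (pbs t)"
  define c0 where "c0 = (pb0, C2_msgs A E pb0)"
  define cf where "cf = (pbs (Suc t), {#}::('a \<times> 'a set) multiset)"
  have path: "msg_step\<^sup>*\<^sup>* c0 cf" using ex[of t] unfolding epoch_def c0_def cf_def pb0_def .
  have inv0: "inv_c A c0" unfolding c0_def pb0_def using init_inv allinv by blast
  have Dt: "\<forall>i\<in>A. pbs t i = pbs (Suc t) i \<and> card (pbs t i) < L"
    using dl unfolding deadlock_def D_def by blast
  have cardeq: "card (pb0 i - {i}) = card (pbs (Suc t) i - {i})" if "i \<in> A" for i
  proof -
    have "pb0 i - {i} = pbs t i - {i}" unfolding pb0_def after_C1_def by auto
    then show ?thesis using Dt that by simp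
  qed
  have F1: "fst c i = pb0 i" if "msg_step\<^sup>*\<^sup>* c0 c" "msg_step\<^sup>*\<^sup>* c cf" "i \<in> A" for c i
  proof -
    have a: "fst c i = pb0 i \<or> card (pb0 i - {i}) < card (fst c i - {i})"
      using mono_steps[OF that(1), of i] unfolding c0_def by simp
    have b: "pbs (Suc t) i = fst c i \<or> card (fst c i - {i}) < card (pbs (Suc t) i - {i})"
      using mono_steps[OF that(2), of i] unfolding cf_def by simp
    have ce: "card (pb0 i - {i}) = card (pbs (Suc t) i - {i})" using cardeq[OF that(3)] .
    show ?thesis
    proof (rule ccontr)
      assume "fst c i \<noteq> pb0 i"
      then have lt: "card (pb0 i - {i}) < card (fst c i - {i})" using a by blast
      from b show False
      proof
        assume "pbs (Suc t) i = fst c i" then show False using lt ce by simp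
      next
        assume "card (fst c i - {i}) < card (pbs (Suc t) i - {i})" then show False using lt ce by linarith
      qed
    qed
  qed
  have pb0_eq: "pb0 i = pbs t i" if "i \<in> A" for i
    using F1[OF path rtranclp.rtrancl_refl that] Dt that unfolding cf_def by simp
  have S: "\<forall>i\<in>A. pb0 i \<subseteq> A \<and> i \<in> pb0 i \<and> card (pb0 i) < card A"
  proof
    fix i assume i: "i \<in> A"
    have "pb0 i \<subseteq> A" using inv0 i unfolding inv_c_def c0_def by simp
    moreover have "i \<in> pb0 i" using i unfolding pb0_def after_C1_def by simp
    moreover have "card (pb0 i) < card A" using pb0_eq[OF i] Dt i assms(4) by fastforce
    ultimately show "pb0 i \<subseteq> A \<and> i \<in> pb0 i \<and> card (pb0 i) < card A" by blast
  qed
  define R where "R k P = (\<exists>c1. msg_step\<^sup>*\<^sup>* c0 c1 \<and> msg_step\<^sup>*\<^sup>* c1 cf \<and> (k, P) \<in># snd c1)" for k P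
  have edge: "\<forall>i\<in>A. \<forall>j. (i, j) \<in> E \<longrightarrow> R j (pb0 i)"
    unfolding R_def using path C2in unfolding c0_def by fastforce
  have Rprop: "k \<in> A \<and> P \<subseteq> A \<and> \<not> card (P - {k}) > card (pb0 k - {k}) \<and>
        (card (P - {k}) = card (pb0 k - {k}) \<and> P \<noteq> pb0 k \<longrightarrow> (\<forall>x\<in>P - pb0 k. R x (pb0 k)))"
    if "R k P" for k P
  proof -
    have "\<exists>c1. msg_step\<^sup>*\<^sup>* c0 c1 \<and> msg_step\<^sup>*\<^sup>* c1 cf \<and> (k, P) \<in># snd c1"
      using that unfolding R_def by simp
    then obtain c1 where c1: "msg_step\<^sup>*\<^sup>* c0 c1" "msg_step\<^sup>*\<^sup>* c1 cf" "(k, P) \<in># snd c1"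
      by (elim exE conjE)
    have sf: "snd cf = {#}" unfolding cf_def by simp
    obtain c1' where c1': "msg_step\<^sup>*\<^sup>* c1 c1'" "(k, P) \<in># snd c1'"
      "msg_step\<^sup>*\<^sup>* (fst (receive k P (fst c1')), (snd c1' - {#(k, P)#}) + snd (receive k P (fst c1'))) cf"
      using deliver[OF c1(2) sf c1(3)] by (elim exE conjE)
    define c2 where "c2 = (fst (receive k P (fst c1')), (snd c1' - {#(k, P)#}) + snd (receive k P (fst c1')))"
    have st: "msg_step c1' c2" unfolding msg_step_def c2_def using c1'(2) by blast
    have p1: "msg_step\<^sup>*\<^sup>* c0 c1'" using c1(1) c1'(1) by simp
    have p2: "msg_step\<^sup>*\<^sup>* c2 cf" using c1'(3) unfolding c2_def .
    have p3: "msg_step\<^sup>*\<^sup>* c0 c2" using p1 st by simp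
    have p4: "msg_step\<^sup>*\<^sup>* c1' cf" using st p2 by (meson converse_rtranclp_into_rtranclp)
    have inv1: "inv_c A c1'" using inv_steps[OF p1 inv0 assms(1)] .
    have "fst (k, P) \<in> A \<and> snd (k, P) \<subseteq> A" using inv1 c1'(2) unfolding inv_c_def by blast
    then have kA: "k \<in> A" and PA: "P \<subseteq> A" by auto
    have f1: "fst c1' k = pb0 k" using F1[OF p1 p4 kA] .
    have f2: "fst c2 k = pb0 k" using F1[OF p3 p2 kA] .
    have nR1: "\<not> card (P - {k}) > card (pb0 k - {k})"
    proof
      assume gt: "card (P - {k}) > card (pb0 k - {k})"
      then have "card (P - {k}) > card (fst c1' k - {k})" using f1 by simp
      then have "fst c2 k = P" unfolding c2_def by (simp add: receive_R1)
      then show False using gt f2 by simp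
    qed
    have R2: "\<forall>x\<in>P - pb0 k. R x (pb0 k)" if eq: "card (P - {k}) = card (pb0 k - {k})" and ne: "P \<noteq> pb0 k"
    proof
      fix x assume x: "x \<in> P - pb0 k"
      have fin: "finite (P - pb0 k)" using PA assms(1) by (meson finite_Diff finite_subset)
      have "snd c2 = (snd c1' - {#(k, P)#}) + image_mset (\<lambda>x. (x, pb0 k)) (mset_set (P - pb0 k))"
      proof -
        have "card (P - {k}) = card (fst c1' k - {k})" "P \<noteq> fst c1' k" using eq ne f1 by simp_all
        then show ?thesis unfolding c2_def using f1 by (simp add: receive_R2)
      qed
      moreover have "x \<in># mset_set (P - pb0 k)" using x fin by simp
      ultimately have "(x, pb0 k) \<in># snd c2" by simp
      then show "R x (pb0 k)" unfolding R_def using p3 p2 by blast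
    qed
    show ?thesis using kA PA nR1 R2 by blast
  qed
  have ne: "A \<noteq> {}" using assms(3,4) by auto
  show False using comb[OF assms(1) assms(2) ne S edge Rprop] by blast
qed

end
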